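(* Let $K$ be a commutative unital ring and let $A\in M_n(K)$ be block triangular with associated partition $A=(A_{ij})_{i,j=1}^q$. If $\lambda\in K$ is an eigenvalue of $A$, then $\lambda$ is an eigenvalue of $A_{ii}$ for some $1\le i\le q$.
   Context: $A$ is block lower triangular if there is a partition $A=(A_{ij})_{i,j=1}^q$, $q>1$, with square diagonal blocks $A_{ii}$ and $A_{ij}=0$ for $i<j$; block upper triangular if $A^T$ is block lower triangular (with the transposed partition); block triangular if either. $\lambda\in K$ is an eigenvalue of a square matrix $B$ if $Bv=\lambda v$ for some nonzero column vector $v$ over $K$; equivalently, $\det(\lambda I-B)$ is a zero divisor of $K$ (an element $u$ with $uw=0$ for some $w\ne0$). *)

theory Defs
  imports "Jordan_Normal_Form.Char_Poly"
begin

text \<open>A block partition of an n x n matrix is given by the list ns of the (positive)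
  sizes of the diagonal blocks; block i occupies the index range
  block_start ns i ..< block_start ns i + ns!i.\<close>

definition block_start :: "nat list \<Rightarrow> nat \<Rightarrow> nat" where
  "block_start ns i = sum_list (take i ns)"

definition block_partition :: "nat \<Rightarrow> nat list \<Rightarrow> bool" where
  "block_partition n ns \<longleftrightarrow> length ns > 1 \<and> (\<forall>i<length ns. ns ! i > 0) \<and> sum_list ns = n"

definition block :: "'a mat \<Rightarrow> nat list \<Rightarrow> nat \<Rightarrow> nat \<Rightarrow> 'a mat" where
  "block A ns i j = mat (ns ! i) (ns ! j)
     (\<lambda>(r, c). A $$ (block_start ns i + r, block_start ns j + c))"

definition block_lower_triangular_wrt :: "'a::zero mat \<Rightarrow> nat list \<Rightarrow> bool" where
  "block_lower_triangular_wrt A ns \<longleftrightarrow>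
     block_partition (dim_row A) ns \<and> A \<in> carrier_mat (dim_row A) (dim_row A) \<and>
     (\<forall>i j. i < j \<and> j < length ns \<longrightarrow> block A ns i j = 0\<^sub>m (ns ! i) (ns ! j))"

definition block_upper_triangular_wrt :: "'a::zero mat \<Rightarrow> nat list \<Rightarrow> bool" where
  "block_upper_triangular_wrt A ns \<longleftrightarrow> block_lower_triangular_wrt (transpose_mat A) ns"

definition block_triangular_wrt :: "'a::zero mat \<Rightarrow> nat list \<Rightarrow> bool" where
  "block_triangular_wrt A ns \<longleftrightarrow>
     block_lower_triangular_wrt A ns \<or> block_upper_triangular_wrt A ns"

end

theory Submission
  imports Defs
begin

lemma bs_Cons_Suc: "block_start (a#ns) (Suc i) = a + block_start ns i"
  by (simp add: block_start_def)

lemma bs_0: "block_start ns 0 = 0"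
  by (simp add: block_start_def)

lemma find_block:
  "k < sum_list ns \<Longrightarrow> \<exists>i<length ns. block_start ns i \<le> k \<and> k < block_start ns i + ns!i"
proof (induction ns arbitrary: k)
  case Nil then show ?case by simp
next
  case (Cons a ns)
  show ?case
  proof (cases "k < a")
    case True then show ?thesis by (intro exI[of _ 0]) (simp add: bs_0)
  next
    case False
    then have "k - a < sum_list ns" using Cons.prems by simp
    from Cons.IH[OF this] obtain i where "i < length ns" "block_start ns i \<le> k - a"
      "k - a < block_start ns i + ns!i" by blast
    then show ?thesis using False
      by (intro exI[of _ "Suc i"]) (auto simp add: bs_Cons_Suc)
  qed
qed

lemma bs_Suc: "i < length ns \<Longrightarrow> block_start ns (Suc i) = block_start ns i + ns!i"
  by (simp add: block_start_def take_Suc_conv_app_nth)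

lemma bs_mono: "i \<le> j \<Longrightarrow> block_start ns i \<le> block_start ns j"
proof -
  assume "i \<le> j"
  then obtain d where "j = i + d" using le_Suc_ex by blast
  then show ?thesis by (simp add: block_start_def take_add)
qed

lemma bs_lt: "i < j \<Longrightarrow> j \<le> length ns \<Longrightarrow> block_start ns i + ns!i \<le> block_start ns j"
  using bs_Suc[of i ns] bs_mono[of "Suc i" j ns] by simp

lemma bs_end: "i < length ns \<Longrightarrow> block_start ns i + ns!i \<le> sum_list ns"
  using bs_lt[of i "length ns" ns] by (simp add: block_start_def)

lemma block_zero_entry:
  assumes "block A ns i j = 0\<^sub>m (ns ! i) (ns ! j)" "r < ns!i" "c < ns!j"
  shows "A $$ (block_start ns i + r, block_start ns j + c) = 0"
proof -
  have "block A ns i j $$ (r,c) = 0" using assms by simp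
  then show ?thesis using assms(2,3) by (simp add: block_def)
qed

lemma block_eig:
  fixes A :: "'a::comm_ring_1 mat"
  assumes A: "A \<in> carrier_mat n n" and v: "v \<in> carrier_vec n"
    and Av: "A *\<^sub>v v = lam \<cdot>\<^sub>v v" and i: "i < length ns" and bp: "sum_list ns = n"
    and r0: "r0 < ns!i" and vr0: "v $ (block_start ns i + r0) \<noteq> 0"
    and out: "\<And>r c. r < ns!i \<Longrightarrow> c < n \<Longrightarrow> c < block_start ns i \<or> block_start ns i + ns!i \<le> c
       \<Longrightarrow> A $$ (block_start ns i + r, c) * v $ c = 0"
  shows "eigenvalue (block A ns i i) lam"
proof -
  define s where "s = block_start ns i"
  define m where "m = ns ! i"
  define w where "w = vec m (\<lambda>r. v $ (s + r))"
  have end_le: "s + m \<le> n" using bs_end[OF i] bp by (simp add: s_def m_def)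
  have bd: "block A ns i i = mat m m (\<lambda>(r, c). A $$ (s + r, s + c))"
    by (simp add: block_def s_def m_def)
  have wne: "w \<noteq> 0\<^sub>v m"
  proof
    assume "w = 0\<^sub>v m"
    then have "w $ r0 = 0" using r0 by (simp add: m_def)
    then show False using vr0 r0 by (simp add: w_def s_def m_def)
  qed
  have eq: "block A ns i i *\<^sub>v w = lam \<cdot>\<^sub>v w"
  proof (rule eq_vecI)
    fix r assume "r < dim_vec (lam \<cdot>\<^sub>v w)"
    then have r: "r < m" by (simp add: w_def)
    have "(A *\<^sub>v v) $ (s + r) = (\<Sum>c\<in>{0..<n}. A $$ (s + r, c) * v $ c)"
      using A v r end_le by (simp add: scalar_prod_def)
    also have "\<dots> = (\<Sum>c\<in>{s..<s+m}. A $$ (s + r, c) * v $ c)"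
      using sum.mono_neutral_right[of "{0..<n}" "{s..<s+m}" "\<lambda>c. A $$ (s + r, c) * v $ c"]
        out[of r] r end_le unfolding s_def m_def by force
    also have "\<dots> = (\<Sum>c\<in>{0..<m}. A $$ (s + r, s + c) * v $ (s + c))"
      using sum.shift_bounds_nat_ivl[of "\<lambda>c. A $$ (s + r, c) * v $ c" 0 s m]
      by (simp add: add.commute)
    also have "\<dots> = (block A ns i i *\<^sub>v w) $ r"
      using r by (simp add: bd w_def scalar_prod_def)
    finally have "(block A ns i i *\<^sub>v w) $ r = (A *\<^sub>v v) $ (s + r)" by simp
    also have "\<dots> = lam * v $ (s + r)" using Av v r end_le by (metis carrier_vecD index_smult_vec(1) less_le_trans add_less_cancel_left)
    finally show "(block A ns i i *\<^sub>v w) $ r = (lam \<cdot>\<^sub>v w) $ r" using r by (simp add: w_def)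
  qed (simp add: bd w_def)
  have "eigenvector (block A ns i i) w lam"
    unfolding eigenvector_def using wne eq by (simp add: bd w_def)
  then show ?thesis unfolding eigenvalue_def by blast
qed

lemma block_before:
  assumes "c < block_start ns i" "block_start ns j \<le> c" shows "j < i"
proof (rule ccontr)
  assume "\<not> j < i"
  then have "block_start ns i \<le> block_start ns j" by (intro bs_mono) simp
  then show False using assms by simp
qed

lemma block_after:
  assumes "block_start ns i + ns!i \<le> c" "c < block_start ns j + ns!j" "i < length ns"
  shows "i < j"
proof (rule ccontr)
  assume "\<not> i < j"
  then consider "j = i" | "j < i" by linarith
  then show False
  proof cases
    case 1 then show False using assms by simp
  next
    case 2
    then have "block_start ns j + ns!j \<le> block_start ns i" using bs_lt[of j i ns] assms(3) by simp
    then show False using assms by simp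
  qed
qed

theorem lemma2p3:
  fixes A :: "'a::comm_ring_1 mat" and ns :: "nat list" and n :: nat and lam :: 'a
  assumes "A \<in> carrier_mat n n"
    and "block_triangular_wrt A ns"
    and "eigenvalue A lam"
  shows "\<exists>i < length ns. eigenvalue (block A ns i i) lam"
proof -
  note A = assms(1)
  obtain v where ev: "eigenvector A v lam" using assms(3) unfolding eigenvalue_def by blast
  have v: "v \<in> carrier_vec n" and vne: "v \<noteq> 0\<^sub>v n" and Av: "A *\<^sub>v v = lam \<cdot>\<^sub>v v"
    using ev A unfolding eigenvector_def by auto
  have bp: "block_partition n ns"
    using assms(2) A unfolding block_triangular_wrt_def block_upper_triangular_wrt_def
      block_lower_triangular_wrt_def by auto
  then have sn: "sum_list ns = n" by (simp add: block_partition_def)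
  define S where "S = {i. i < length ns \<and> (\<exists>r<ns!i. v $ (block_start ns i + r) \<noteq> 0)}"
  obtain k where k: "k < n" "v $ k \<noteq> 0"
    using vne v by (metis carrier_vecD eq_vecI index_zero_vec(1) index_zero_vec(2))
  obtain i0 where i0: "i0 < length ns" "block_start ns i0 \<le> k" "k < block_start ns i0 + ns!i0"
    using find_block[of k ns] k sn by auto
  have "i0 \<in> S" unfolding S_def using i0 k
    by (auto intro!: exI[of _ "k - block_start ns i0"])
  then have Sne: "S \<noteq> {}" by auto
  have Sfin: "finite S" unfolding S_def by auto
  have vz: "v $ c = 0" if "c < n" "j \<notin> S" "j < length ns" "block_start ns j \<le> c"
    "c < block_start ns j + ns!j" for c j
    using that unfolding S_def by (auto dest: spec[of _ "c - block_start ns j"])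
  have blk: "\<exists>j<length ns. block_start ns j \<le> c \<and> c < block_start ns j + ns!j" if "c < n" for c
    using find_block[of c ns] that sn by auto
  show ?thesis
  proof (cases "block_lower_triangular_wrt A ns")
    case True
    then have Z: "block A ns i j = 0\<^sub>m (ns ! i) (ns ! j)" if "i < j" "j < length ns" for i j
      using that unfolding block_lower_triangular_wrt_def by auto
    define i where "i = Min S"
    have iS: "i \<in> S" using Sne Sfin by (simp add: i_def)
    then obtain r0 where i: "i < length ns" and r0: "r0 < ns!i" "v $ (block_start ns i + r0) \<noteq> 0"
      unfolding S_def by auto
    have "eigenvalue (block A ns i i) lam"
    proof (rule block_eig[OF A v Av i sn r0])
      fix r c assume r: "r < ns!i" and c: "c < n"
        and cc: "c < block_start ns i \<or> block_start ns i + ns!i \<le> c"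
      obtain j where j: "j < length ns" "block_start ns j \<le> c" "c < block_start ns j + ns!j"
        using blk[OF c] by blast
      show "A $$ (block_start ns i + r, c) * v $ c = 0"
        using cc
      proof
        assume "c < block_start ns i"
        then have "j < i" using block_before j by blast
        then have "j \<notin> S" using Sfin i_def Min_le by (metis leD)
        then show ?thesis using vz[OF c _ j] by simp
      next
        assume "block_start ns i + ns!i \<le> c"
        then have "i < j" using block_after j i by blast
        then have "A $$ (block_start ns i + r, block_start ns j + (c - block_start ns j)) = 0"
          using block_zero_entry[OF Z[OF _ j(1)] r, of "c - block_start ns j"] j by linarith
        then show ?thesis using j by simp
      qed
    qed
    then show ?thesis using i by blast
  next
    case False
    then have U: "block_lower_triangular_wrt (transpose_mat A) ns"
      using assms(2) unfolding block_triangular_wrt_def block_upper_triangular_wrt_def by auto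
    then have Z: "block (transpose_mat A) ns i j = 0\<^sub>m (ns ! i) (ns ! j)" if "i < j" "j < length ns" for i j
      using that unfolding block_lower_triangular_wrt_def by auto
    define i where "i = Max S"
    have iS: "i \<in> S" using Sne Sfin by (simp add: i_def)
    then obtain r0 where i: "i < length ns" and r0: "r0 < ns!i" "v $ (block_start ns i + r0) \<noteq> 0"
      unfolding S_def by auto
    have "eigenvalue (block A ns i i) lam"
    proof (rule block_eig[OF A v Av i sn r0])
      fix r c assume r: "r < ns!i" and c: "c < n"
        and cc: "c < block_start ns i \<or> block_start ns i + ns!i \<le> c"
      obtain j where j: "j < length ns" "block_start ns j \<le> c" "c < block_start ns j + ns!j"
        using blk[OF c] by blast
      show "A $$ (block_start ns i + r, c) * v $ c = 0"
        using cc
      proof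
        assume "c < block_start ns i"
        then have "j < i" using block_before j by blast
        then have "transpose_mat A $$ (block_start ns j + (c - block_start ns j), block_start ns i + r) = 0"
          using block_zero_entry[OF Z[OF _ i] _ r, of j "c - block_start ns j"] j by linarith
        moreover have "block_start ns i + r < n" using bs_end[OF i] sn r by simp
        ultimately show ?thesis using j A c by simp
      next
        assume "block_start ns i + ns!i \<le> c"
        then have "i < j" using block_after j i by blast
        then have "j \<notin> S" using Sfin i_def Max_ge by (metis leD)
        then show ?thesis using vz[OF c _ j] by simp
      qed
    qed
    then show ?thesis using i by blast
  qed
qed

end
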